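(* Let $L$ be a precompact Hausdorff co-Heyting algebra. Then the set $\mathcal I^{!\vee}(L)$ of completely join irreducible elements and the set $\mathcal I^{!\wedge}(L)$ of completely meet irreducible elements generate the same co-Heyting subalgebra of $L$ (substructure for $0,1,\vee,\wedge,-$), and this subalgebra is the smallest co-Heyting subalgebra of $L$ that is dense in $L$ for the codimetric topology.
   Context: A co-Heyting algebra is a bounded distributive lattice $(L,0,1,\vee,\wedge)$ such that $a-b=\min\{c\in L: a\le b\vee c\}$ exists for all $a,b$. Let $a\triangle b=(a-b)\vee(b-a)$; for an ideal $I$, $L/I$ is the quotient by $a\equiv_I b\iff a\triangle b\in I$. $\operatorname{Spec}L$ is the set of prime filters ordered by inclusion; height = foundation rank there; $\operatorname{codim}_La=\min\{\operatorname{height}\mathfrak p: a\in\mathfrak p\}$ ($+\infty$ if none); $dL=\{a:\operatorname{codim}_La\ge d\}$. The codimetric pseudometric is $\operatorname{dist}_L(a,b)=2^{-\operatorname{codim}_L(a\triangle b)}$ if finite, $0$ otherwise; the codimetric topology is the one it defines. $L$ is Hausdorff if every nonzero element has finite codimension; precompact if $L/dL$ is finite for every positive integer $d$. $x\ne0$ is completely join irreducible if $x\le\bigvee A$ implies $x\le a$ for some $a\in A$; $x\ne1$ is completely meet irreducible if $\bigwedge A\le x$ implies $a\le x$ for some $a\in A$. *)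

theory Defs
  imports "HOL-Library.Extended_Nat"
begin

class coheyting = distrib_lattice + bounded_lattice +
  assumes ex_coheyting_diff:
    "\<exists>c. a \<le> sup b c \<and> (\<forall>c'. a \<le> sup b c' \<longrightarrow> c \<le> c')"

definition cdiff :: "'a::coheyting \<Rightarrow> 'a \<Rightarrow> 'a" where
  "cdiff a b = (LEAST c. a \<le> sup b c)"

definition symdiff :: "'a::coheyting \<Rightarrow> 'a \<Rightarrow> 'a" where
  "symdiff a b = sup (cdiff a b) (cdiff b a)"

definition prime_filter :: "'a::coheyting set \<Rightarrow> bool" where
  "prime_filter F \<longleftrightarrow>
     top \<in> F \<and> bot \<notin> F \<and>
     (\<forall>a b. a \<in> F \<and> a \<le> b \<longrightarrow> b \<in> F) \<and>
     (\<forall>a b. a \<in> F \<and> b \<in> F \<longrightarrow> inf a b \<in> F) \<and>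
     (\<forall>a b. sup a b \<in> F \<longrightarrow> a \<in> F \<or> b \<in> F)"

text \<open>Finite levels of the foundation rank on (Spec L, subset):
  rank_ge n p holds iff the foundation rank of p is at least n
  (with rank = infinity for points that are not in the well-founded part).\<close>

inductive rank_ge :: "nat \<Rightarrow> 'a::coheyting set \<Rightarrow> bool" where
  rank_ge_0: "prime_filter p \<Longrightarrow> rank_ge 0 p"
| rank_ge_Suc: "rank_ge n q \<Longrightarrow> prime_filter p \<Longrightarrow> q \<subset> p \<Longrightarrow> rank_ge (Suc n) p"

definition height :: "'a::coheyting set \<Rightarrow> enat" where
  "height p = Sup {enat n | n. rank_ge n p}"

definition codim :: "'a::coheyting \<Rightarrow> enat" where
  "codim a = Inf {height p | p. prime_filter p \<and> a \<in> p}"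

definition codim_ideal :: "nat \<Rightarrow> 'a::coheyting set" where
  "codim_ideal d = {a. enat d \<le> codim a}"

definition quot_rel :: "'a::coheyting set \<Rightarrow> ('a \<times> 'a) set" where
  "quot_rel I = {(a, b). symdiff a b \<in> I}"

definition cdist :: "'a::coheyting \<Rightarrow> 'a \<Rightarrow> real" where
  "cdist a b = (case codim (symdiff a b) of enat n \<Rightarrow> inverse (2 ^ n) | \<infinity> \<Rightarrow> 0)"

definition codim_open :: "'a::coheyting set \<Rightarrow> bool" where
  "codim_open U \<longleftrightarrow> (\<forall>x\<in>U. \<exists>e>0. \<forall>y. cdist x y < e \<longrightarrow> y \<in> U)"

definition codim_dense :: "'a::coheyting set \<Rightarrow> bool" where
  "codim_dense S \<longleftrightarrow> (\<forall>U. codim_open U \<and> U \<noteq> {} \<longrightarrow> U \<inter> S \<noteq> {})"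

definition hausdorff :: "'a::coheyting itself \<Rightarrow> bool" where
  "hausdorff _ \<longleftrightarrow> (\<forall>a::'a. a \<noteq> bot \<longrightarrow> codim a \<noteq> \<infinity>)"

definition precompact :: "'a::coheyting itself \<Rightarrow> bool" where
  "precompact _ \<longleftrightarrow>
     (\<forall>d::nat. 0 < d \<longrightarrow> finite ((UNIV::'a set) // quot_rel (codim_ideal d)))"

definition coheyting_subalg :: "'a::coheyting set \<Rightarrow> bool" where
  "coheyting_subalg S \<longleftrightarrow> bot \<in> S \<and> top \<in> S \<and>
     (\<forall>a\<in>S. \<forall>b\<in>S. sup a b \<in> S \<and> inf a b \<in> S \<and> cdiff a b \<in> S)"

definition gen_subalg :: "'a::coheyting set \<Rightarrow> 'a set" where
  "gen_subalg X = \<Inter>{S. coheyting_subalg S \<and> X \<subseteq> S}"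

definition is_lub :: "'a::order set \<Rightarrow> 'a \<Rightarrow> bool" where
  "is_lub A s \<longleftrightarrow> (\<forall>a\<in>A. a \<le> s) \<and> (\<forall>u. (\<forall>a\<in>A. a \<le> u) \<longrightarrow> s \<le> u)"

definition is_glb :: "'a::order set \<Rightarrow> 'a \<Rightarrow> bool" where
  "is_glb A s \<longleftrightarrow> (\<forall>a\<in>A. s \<le> a) \<and> (\<forall>u. (\<forall>a\<in>A. u \<le> a) \<longrightarrow> u \<le> s)"

definition compl_join_irred :: "'a::coheyting set" where
  "compl_join_irred = {x. x \<noteq> bot \<and>
     (\<forall>A s. is_lub A s \<and> x \<le> s \<longrightarrow> (\<exists>a\<in>A. x \<le> a))}"

definition compl_meet_irred :: "'a::coheyting set" where
  "compl_meet_irred = {x. x \<noteq> top \<and>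
     (\<forall>A s. is_glb A s \<and> s \<le> x \<longrightarrow> (\<exists>a\<in>A. a \<le> x))}"

end

theory Submission
  imports Defs
begin

lemma cdiff_spec:
  fixes a b :: "'a::coheyting"
  shows "a \<le> sup b (cdiff a b) \<and> (\<forall>c. a \<le> sup b c \<longrightarrow> cdiff a b \<le> c)"
proof -
  obtain c where c: "a \<le> sup b c" "\<forall>c'. a \<le> sup b c' \<longrightarrow> c \<le> c'"
    using ex_coheyting_diff by blast
  show ?thesis unfolding cdiff_def
    by (rule LeastI2_order[of "\<lambda>c. a \<le> sup b c" c]) (use c in auto)
qed

lemma cdiff_le_iff: "cdiff a b \<le> c \<longleftrightarrow> (a::'a::coheyting) \<le> sup b c"
proof
  assume "cdiff a b \<le> c"
  then have "sup b (cdiff a b) \<le> sup b c" by (simp add: sup.coboundedI2)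
  then show "a \<le> sup b c" using cdiff_spec[of a b] order_trans by blast
qed (use cdiff_spec in blast)

lemma le_sup_cdiff: "(a::'a::coheyting) \<le> sup b (cdiff a b)"
  using cdiff_spec by blast

lemma cdiff_self: "cdiff (a::'a::coheyting) a = bot"
  using cdiff_le_iff[of a a bot] by (simp add: bot_unique)

lemma cdiff_bot_le: "cdiff (a::'a::coheyting) b = bot \<Longrightarrow> a \<le> b"
  using le_sup_cdiff[of a b] by simp

lemma t1: "inf m u \<le> (x::'a::coheyting) \<Longrightarrow> inf m' u \<le> y \<Longrightarrow> inf (inf m m') u \<le> inf x y"
proof -
  assume h: "inf m u \<le> x" "inf m' u \<le> y"
  have "inf (inf m m') u \<le> inf m u" by (rule inf_mono) simp_all
  moreover have "inf (inf m m') u \<le> inf m' u" by (rule inf_mono) simp_all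
  ultimately show ?thesis using h by (meson le_inf_iff order_trans)
qed
lemma t2: "inf (inf m1 m2) (sup u v) \<le> sup (inf m1 u) (inf (m2::'a::coheyting) v)"
proof -
  have "inf (inf m1 m2) (sup u v) = sup (inf (inf m1 m2) u) (inf (inf m1 m2) v)" by (rule inf_sup_distrib1)
  also have "\<dots> \<le> sup (inf m1 u) (inf m2 v)" by (intro sup_mono inf_mono) simp_all
  finally show ?thesis .
qed

abbreviation pf where "pf \<equiv> prime_filter"

lemma pf_up: "pf F \<Longrightarrow> a \<in> F \<Longrightarrow> a \<le> b \<Longrightarrow> b \<in> F"
  unfolding prime_filter_def by blast
lemma pf_top: "pf F \<Longrightarrow> top \<in> F"
  unfolding prime_filter_def by blast
lemma pf_bot: "pf F \<Longrightarrow> bot \<notin> F"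
  unfolding prime_filter_def by blast
lemma pf_inf: "pf F \<Longrightarrow> inf a b \<in> F \<longleftrightarrow> a \<in> F \<and> b \<in> F"
  unfolding prime_filter_def by (meson inf.cobounded1 inf.cobounded2)
lemma pf_sup: "pf F \<Longrightarrow> sup a b \<in> F \<longleftrightarrow> a \<in> F \<or> b \<in> F"
  unfolding prime_filter_def by (meson sup.cobounded1 sup.cobounded2)
lemma pf_cdiff: "pf F \<Longrightarrow> a \<in> F \<Longrightarrow> b \<notin> F \<Longrightarrow> cdiff a b \<in> F"
  using pf_up[of F a "sup b (cdiff a b)"] le_sup_cdiff[of a b] pf_sup by blast
lemma pf_symdiff: "pf F \<Longrightarrow> symdiff a b \<in> F \<longleftrightarrow> cdiff a b \<in> F \<or> cdiff b a \<in> F"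
  unfolding symdiff_def using pf_sup by blast

lemma prime_sep:
  fixes a b :: "'a::coheyting"
  assumes p: "pf p" and d: "cdiff a b \<in> p"
  shows "\<exists>q. pf q \<and> q \<subseteq> p \<and> a \<in> q \<and> b \<notin> q"
proof -
  define J where "J = {c. \<exists>e. e \<notin> p \<and> c \<le> sup b e}"
  define S where "S = {F. a \<in> F \<and> (\<forall>x y. x \<in> F \<and> x \<le> y \<longrightarrow> y \<in> F) \<and>
      (\<forall>x y. x \<in> F \<and> y \<in> F \<longrightarrow> inf x y \<in> F) \<and> F \<inter> J = {}}"
  have Jdown: "c \<in> J \<Longrightarrow> c' \<le> c \<Longrightarrow> c' \<in> J" for c c'
  proof -
    assume "c \<in> J" "c' \<le> c"
    then obtain e where "e \<notin> p" "c \<le> sup b e" unfolding J_def by blast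
    then have "c' \<le> sup b e" using \<open>c' \<le> c\<close> order_trans by blast
    then show "c' \<in> J" unfolding J_def using \<open>e \<notin> p\<close> by blast
  qed
  have Jsup: "c \<in> J \<Longrightarrow> c' \<in> J \<Longrightarrow> sup c c' \<in> J" for c c'
  proof -
    assume "c \<in> J" "c' \<in> J"
    then obtain e e' where "e \<notin> p" "c \<le> sup b e" "e' \<notin> p" "c' \<le> sup b e'"
      unfolding J_def by blast
    have "sup c c' \<le> sup (sup b e) (sup b e')" using sup_mono[OF \<open>c \<le> sup b e\<close> \<open>c' \<le> sup b e'\<close>] .
    also have "\<dots> = sup b (sup e e')" by (simp add: ac_simps)
    finally have "sup c c' \<le> sup b (sup e e')" .
    moreover have "sup e e' \<notin> p" using pf_sup[OF p] \<open>e \<notin> p\<close> \<open>e' \<notin> p\<close> by blast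
    ultimately show ?thesis unfolding J_def by blast
  qed
  have bJ: "b \<in> J" unfolding J_def using pf_bot[OF p] by (intro CollectI exI[of _ bot]) simp
  have aJ: "a \<notin> J"
  proof
    assume "a \<in> J"
    then obtain e where "e \<notin> p" "a \<le> sup b e" unfolding J_def by blast
    then have "cdiff a b \<le> e" using cdiff_le_iff by blast
    then show False using pf_up[OF p d] \<open>e \<notin> p\<close> by blast
  qed
  have A0: "{c. a \<le> c} \<in> S"
  proof -
    have "{c. a \<le> c} \<inter> J = {}"
    proof (rule ccontr)
      assume "{c. a \<le> c} \<inter> J \<noteq> {}"
      then obtain c where "a \<le> c" "c \<in> J" by blast
      then show False using Jdown aJ by blast
    qed
    moreover have "\<forall>x y. x \<in> {c. a \<le> c} \<and> x \<le> y \<longrightarrow> y \<in> {c. a \<le> c}" using order_trans by blast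
    moreover have "\<forall>x y. x \<in> {c. a \<le> c} \<and> y \<in> {c. a \<le> c} \<longrightarrow> inf x y \<in> {c. a \<le> c}" by simp
    ultimately show ?thesis unfolding S_def by blast
  qed
  have "\<exists>M\<in>S. \<forall>X\<in>S. M \<subseteq> X \<longrightarrow> X = M"
  proof (rule Zorn_Lemma2, intro ballI)
    fix C assume C: "C \<in> chains S"
    show "\<exists>U\<in>S. \<forall>X\<in>C. X \<subseteq> U"
    proof (cases "C = {}")
      case True then show ?thesis using A0 by blast
    next
      case False
      have CS: "C \<subseteq> S" and ch: "\<forall>A\<in>C. \<forall>B\<in>C. A \<subseteq> B \<or> B \<subseteq> A"
        using C unfolding chains_def chain_subset_def by auto
      have "\<Union>C \<in> S"
      proof -
        have "a \<in> \<Union>C" using False CS unfolding S_def by blast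
        moreover have "\<forall>x y. x \<in> \<Union>C \<and> x \<le> y \<longrightarrow> y \<in> \<Union>C"
          using CS unfolding S_def by blast
        moreover have "\<forall>x y. x \<in> \<Union>C \<and> y \<in> \<Union>C \<longrightarrow> inf x y \<in> \<Union>C"
        proof (intro allI impI)
          fix x y assume "x \<in> \<Union>C \<and> y \<in> \<Union>C"
          then obtain F G where FG: "F \<in> C" "G \<in> C" "x \<in> F" "y \<in> G" by blast
          have infc: "\<And>H x y. H \<in> C \<Longrightarrow> x \<in> H \<Longrightarrow> y \<in> H \<Longrightarrow> inf x y \<in> H"
            using CS unfolding S_def by blast
          from ch FG(1,2) have "F \<subseteq> G \<or> G \<subseteq> F" by blast
          then show "inf x y \<in> \<Union>C"
          proof
            assume "F \<subseteq> G" then show ?thesis using infc[OF FG(2), of x y] FG by blast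
          next
            assume "G \<subseteq> F" then show ?thesis using infc[OF FG(1), of x y] FG by blast
          qed
        qed
        moreover have "\<Union>C \<inter> J = {}" using CS unfolding S_def by blast
        ultimately show ?thesis unfolding S_def by blast
      qed
      then show ?thesis by blast
    qed
  qed
  then obtain M where MS: "M \<in> S" and Mmax: "\<forall>X\<in>S. M \<subseteq> X \<longrightarrow> X = M" by blast
  have aM: "a \<in> M" and Mup: "\<And>x y. x \<in> M \<Longrightarrow> x \<le> y \<Longrightarrow> y \<in> M"
    and Minf: "\<And>x y. x \<in> M \<Longrightarrow> y \<in> M \<Longrightarrow> inf x y \<in> M" and MJ: "M \<inter> J = {}"
    using MS unfolding S_def by blast+
  have ext: "\<exists>m\<in>M. inf m u \<in> J" if "u \<notin> M" for u
  proof (rule ccontr)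
    assume no: "\<not> (\<exists>m\<in>M. inf m u \<in> J)"
    define Mu where "Mu = {c. \<exists>m\<in>M. inf m u \<le> c}"
    have "Mu \<in> S" unfolding S_def
    proof (intro CollectI conjI allI impI)
      show "a \<in> Mu" unfolding Mu_def using aM inf.cobounded1 by blast
    next
      fix x y assume "x \<in> Mu \<and> x \<le> y" then show "y \<in> Mu" unfolding Mu_def using order_trans by blast
    next
      fix x y assume "x \<in> Mu \<and> y \<in> Mu"
      then obtain m m' where "m \<in> M" "inf m u \<le> x" "m' \<in> M" "inf m' u \<le> y" unfolding Mu_def by blast
      then have "inf (inf m m') u \<le> inf x y" using t1 by blast
      then show "inf x y \<in> Mu" unfolding Mu_def using Minf \<open>m \<in> M\<close> \<open>m' \<in> M\<close> by blast
    next
      show "Mu \<inter> J = {}"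
      proof (rule ccontr)
        assume "Mu \<inter> J \<noteq> {}"
        then obtain c m where "m \<in> M" "inf m u \<le> c" "c \<in> J" unfolding Mu_def by blast
        then show False using no Jdown by blast
      qed
    qed
    moreover have "M \<subseteq> Mu" unfolding Mu_def using inf.cobounded1 by blast
    moreover have "u \<in> Mu" unfolding Mu_def using aM inf.cobounded2 by blast
    ultimately show False using Mmax that by blast
  qed
  have "pf M" unfolding prime_filter_def
  proof (intro conjI allI impI)
    show "top \<in> M" using Mup[OF aM top_greatest] .
    show "bot \<notin> M" using MJ Jdown[OF bJ bot_least] by blast
  next
    fix x y assume "x \<in> M \<and> x \<le> y" then show "y \<in> M" using Mup by blast
  next
    fix x y assume "x \<in> M \<and> y \<in> M" then show "inf x y \<in> M" using Minf by blast
  next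
    fix u v assume uv: "sup u v \<in> M"
    show "u \<in> M \<or> v \<in> M"
    proof (rule ccontr)
      assume "\<not> (u \<in> M \<or> v \<in> M)"
      then obtain m1 m2 where m: "m1 \<in> M" "inf m1 u \<in> J" "m2 \<in> M" "inf m2 v \<in> J"
        using ext by blast
      define m where "m = inf m1 m2"
      have "inf m (sup u v) \<in> M" unfolding m_def using m uv Minf by blast
      moreover have "inf m (sup u v) \<le> sup (inf m1 u) (inf m2 v)"
        unfolding m_def by (rule t2)
      then have "inf m (sup u v) \<in> J" by (rule Jdown[OF Jsup[OF m(2) m(4)]])
      ultimately show False using MJ by blast
    qed
  qed
  moreover have "M \<subseteq> p"
  proof
    fix c assume "c \<in> M"
    show "c \<in> p"
    proof (rule ccontr)
      assume "c \<notin> p" then have "c \<in> J" unfolding J_def using sup.cobounded2 by blast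
      then show False using MJ \<open>c \<in> M\<close> by blast
    qed
  qed
  ultimately show ?thesis using aM bJ MJ by blast
qed


lemma rank_ge_pf: "rank_ge n p \<Longrightarrow> pf p"
  by (induction rule: rank_ge.induct) auto

lemma rank_ge_Suc_down: "rank_ge (Suc n) p \<Longrightarrow> rank_ge n p"
proof (induction n arbitrary: p)
  case 0
  then show ?case using rank_ge_pf rank_ge_0 by blast
next
  case (Suc n)
  from Suc.prems obtain q where "rank_ge (Suc n) q" "pf p" "q \<subset> p"
    by (cases rule: rank_ge.cases) auto
  then show ?case using Suc.IH rank_ge_Suc by blast
qed

lemma rank_ge_mono: "m \<le> n \<Longrightarrow> rank_ge n p \<Longrightarrow> rank_ge m p"
proof (induction n)
  case 0 then show ?case by simp
next
  case (Suc n)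
  then show ?case using rank_ge_Suc_down le_Suc_eq by blast
qed

lemma rank_ge_sub: assumes "rank_ge n q" "q \<subseteq> p" "pf p" shows "rank_ge n p"
proof (cases "q = p")
  case True then show ?thesis using assms by simp
next
  case False
  have "rank_ge (Suc n) p" using False assms rank_ge_Suc by blast
  then show ?thesis by (rule rank_ge_Suc_down)
qed

lemma rank_ge_height: "pf p \<Longrightarrow> rank_ge n p \<longleftrightarrow> enat n \<le> height p"
proof
  assume "rank_ge n p" then show "enat n \<le> height p"
    unfolding height_def by (auto intro: Sup_upper)
next
  assume p: "pf p" and h: "enat n \<le> height p"
  show "rank_ge n p"
  proof (rule ccontr)
    assume nr: "\<not> rank_ge n p"
    then have n0: "n > 0" using p rank_ge_0 by (cases n) auto
    have "\<forall>x\<in>{enat m | m. rank_ge m p}. x \<le> enat (n - 1)"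
    proof
      fix x assume "x \<in> {enat m | m. rank_ge m p}"
      then obtain m where "x = enat m" "rank_ge m p" by blast
      then have "m < n" using nr rank_ge_mono[of n m p] by (cases "n \<le> m") auto
      then show "x \<le> enat (n - 1)" using \<open>x = enat m\<close> by simp
    qed
    then have "height p \<le> enat (n - 1)" unfolding height_def by (intro Sup_least) blast
    then show False using h n0 by (cases "height p") auto
  qed
qed

lemma height_mono: "q \<subseteq> p \<Longrightarrow> pf q \<Longrightarrow> pf p \<Longrightarrow> height q \<le> height p"
proof -
  assume a: "q \<subseteq> p" "pf q" "pf p"
  have "{enat n | n. rank_ge n q} \<subseteq> {enat n | n. rank_ge n p}" using rank_ge_sub[OF _ a(1) a(3)] by blast
  then show ?thesis unfolding height_def by (rule Sup_subset_mono)
qed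

lemma height_strict:
  assumes "q \<subset> p" "pf q" "pf p" "height p = enat h"
  shows "\<exists>m. height q = enat m \<and> m < h"
proof -
  have "height q \<le> enat h" using height_mono assms by (metis less_imp_le)
  then obtain m where m: "height q = enat m" using enat_ile by blast
  then have "rank_ge m q" using rank_ge_height[OF assms(2), of m] by simp
  then have "rank_ge (Suc m) p" using assms rank_ge_Suc by blast
  then have "enat (Suc m) \<le> enat h" using rank_ge_height[OF assms(3), of "Suc m"] assms(4) by simp
  then show ?thesis using m by auto
qed

lemma exact_height:
  "pf p \<Longrightarrow> height p = enat h \<Longrightarrow> m \<le> h \<Longrightarrow> \<exists>q. pf q \<and> q \<subseteq> p \<and> height q = enat m"
proof (induction h arbitrary: p)
  case 0 then show ?case by auto
next
  case (Suc h)
  show ?case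
  proof (cases "m = Suc h")
    case True then show ?thesis using Suc.prems by auto
  next
    case False
    then have mh: "m \<le> h" using Suc.prems by simp
    have "rank_ge (Suc h) p" using rank_ge_height[OF Suc.prems(1), of "Suc h"] Suc.prems(2) by simp
    then obtain q where q: "rank_ge h q" "q \<subset> p"
      by (cases rule: rank_ge.cases) auto
    have pq: "pf q" using q rank_ge_pf by blast
    obtain k where k: "height q = enat k" "k < Suc h" using height_strict[OF q(2) pq Suc.prems(1,2)] by blast
    have "enat h \<le> height q" using q(1) rank_ge_height[OF pq] by blast
    then have "k = h" using k by simp
    then obtain q' where "pf q'" "q' \<subseteq> q" "height q' = enat m" using Suc.IH[OF pq _ mh] k by blast
    then show ?thesis using q by blast
  qed
qed

lemma codim_le: "pf q \<Longrightarrow> c \<in> q \<Longrightarrow> codim c \<le> height q"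
  unfolding codim_def by (rule Inf_lower) blast

lemma codim_witness:
  assumes "codim c \<noteq> \<infinity>"
  shows "\<exists>q. pf q \<and> c \<in> q \<and> height q = codim c"
proof -
  let ?S = "{height p | p. pf p \<and> c \<in> p}"
  have ne: "?S \<noteq> {}"
  proof
    assume "?S = {}" then have "codim c = \<infinity>" unfolding codim_def by (simp add: Inf_enat_def)
    then show False using assms by simp
  qed
  obtain x where "x \<in> ?S" using ne by blast
  then have "(LEAST x. x \<in> ?S) \<in> ?S" by (rule LeastI)
  moreover have "Inf ?S = (LEAST x. x \<in> ?S)" unfolding Inf_enat_def using ne by (rule if_not_P)
  ultimately have "Inf ?S \<in> ?S" by simp
  then show ?thesis unfolding codim_def by auto
qed

lemma codim_bot: "codim (bot::'a::coheyting) = \<infinity>"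
  unfolding codim_def using pf_bot by (auto simp: Inf_enat_def)


definition ismax :: "'a::coheyting set \<Rightarrow> 'a \<Rightarrow> bool" where
  "ismax r k \<longleftrightarrow> k \<notin> r \<and> (\<forall>a. a \<notin> r \<longrightarrow> a \<le> k)"
definition ismin :: "'a::coheyting set \<Rightarrow> 'a \<Rightarrow> bool" where
  "ismin r x \<longleftrightarrow> x \<in> r \<and> (\<forall>a\<in>r. x \<le> a)"

lemma crit:
  fixes a b :: "'a::coheyting"
  assumes H: "hausdorff TYPE('a)"
    and h: "\<And>q. pf q \<Longrightarrow> height q \<noteq> \<infinity> \<Longrightarrow> a \<in> q \<Longrightarrow> b \<in> q"
  shows "a \<le> b"
proof (rule ccontr)
  assume "\<not> a \<le> b"
  then have "cdiff a b \<noteq> bot" using cdiff_bot_le by blast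
  then have ci: "codim (cdiff a b) \<noteq> \<infinity>" using H unfolding hausdorff_def by blast
  then obtain q where q: "pf q" "cdiff a b \<in> q" "height q = codim (cdiff a b)"
    using codim_witness by blast
  obtain q' where q': "pf q'" "q' \<subseteq> q" "a \<in> q'" "b \<notin> q'" using prime_sep[OF q(1,2)] by blast
  have "height q' \<le> height q" using height_mono q'(2,1) q(1) by blast
  obtain i where i: "codim (cdiff a b) = enat i" using ci by auto
  then have "height q' \<le> enat i" using \<open>height q' \<le> height q\<close> q(3) by simp
  then obtain j where "height q' = enat j" using enat_ile by blast
  then have "height q' \<noteq> \<infinity>" by simp
  then show False using h q' by blast
qed

lemma agree:
  assumes "enat k \<le> codim (symdiff a b)" "pf q" "height q < enat k"
  shows "a \<in> q \<longleftrightarrow> b \<in> q"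
proof (rule ccontr)
  assume "\<not> (a \<in> q \<longleftrightarrow> b \<in> q)"
  then have "cdiff a b \<in> q \<or> cdiff b a \<in> q" using pf_cdiff assms(2) by blast
  then have "symdiff a b \<in> q" using pf_symdiff assms(2) by blast
  then have "codim (symdiff a b) \<le> height q" using codim_le assms(2) by blast
  then show False using assms(1,3) by simp
qed

lemma symdiff_self: "symdiff (a::'a::coheyting) a = bot"
  unfolding symdiff_def cdiff_self by simp

lemma fin_P:
  assumes PC: "precompact TYPE('a::coheyting)"
  shows "finite {q::'a set. pf q \<and> height q < enat k}"
proof (cases "k = 0")
  case True
  then show ?thesis by (simp add: zero_enat_def[symmetric])
next
  case False
  let ?R = "quot_rel (codim_ideal k :: 'a set)"
  let ?P = "{q::'a set. pf q \<and> height q < enat k}"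
  have fin: "finite (UNIV // ?R)" using PC False unfolding precompact_def by blast
  have Rd: "(a, b) \<in> ?R \<longleftrightarrow> enat k \<le> codim (symdiff a b)" for a b :: 'a
    unfolding quot_rel_def codim_ideal_def by simp
  have cls_in: "?R `` {a} \<subseteq> q" if "q \<in> ?P" "a \<in> q" for q a
  proof
    fix b assume "b \<in> ?R `` {a}"
    then have "enat k \<le> codim (symdiff a b)" using Rd by blast
    then show "b \<in> q" using agree[of k a b q] that by blast
  qed
  have self: "a \<in> ?R `` {a}" for a :: 'a
    using Rd[of a a] by (simp add: symdiff_self codim_bot)
  define f where "f q = {C \<in> UNIV // ?R. C \<subseteq> q}" for q :: "'a set"
  have sub: "q1 \<subseteq> q2" if "q1 \<in> ?P" "q2 \<in> ?P" "f q1 = f q2" for q1 q2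
  proof
    fix a assume a: "a \<in> q1"
    have "?R `` {a} \<in> f q1" unfolding f_def using cls_in[OF that(1) a] by (auto intro: quotientI)
    then have "?R `` {a} \<subseteq> q2" using that(3) unfolding f_def by blast
    then show "a \<in> q2" using self by blast
  qed
  have "inj_on f ?P" unfolding inj_on_def using sub by blast
  moreover have "f ` ?P \<subseteq> Pow (UNIV // ?R)" unfolding f_def by blast
  then have "finite (f ` ?P)" using fin by (meson finite_Pow_iff finite_subset)
  ultimately show ?thesis using finite_imageD by blast
qed

lemma approx:
  fixes a :: "'a::coheyting"
  assumes D: "codim_dense T"
  shows "\<exists>t\<in>T. \<forall>q. pf q \<and> height q < enat k \<longrightarrow> (a \<in> q \<longleftrightarrow> t \<in> q)"
proof -
  define U where "U = {y::'a. \<forall>q::'a set. pf q \<and> height q < enat k \<longrightarrow> (a \<in> q \<longleftrightarrow> y \<in> q)}"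
  have "codim_open U" unfolding codim_open_def
  proof
    fix x assume x: "x \<in> U"
    have "\<forall>y::'a. cdist x y < inverse (2 ^ k :: real) \<longrightarrow> y \<in> U"
    proof (intro allI impI)
      fix y assume c: "cdist x y < inverse (2 ^ k :: real)"
      have "\<forall>q::'a set. pf q \<and> height q < enat k \<longrightarrow> (x \<in> q \<longleftrightarrow> y \<in> q)"
      proof (intro allI impI)
        fix q :: "'a set" assume q: "pf q \<and> height q < enat k"
        show "x \<in> q \<longleftrightarrow> y \<in> q"
        proof (rule ccontr)
          assume "\<not> (x \<in> q \<longleftrightarrow> y \<in> q)"
          then have "cdiff x y \<in> q \<or> cdiff y x \<in> q" using pf_cdiff q by blast
          then have "symdiff x y \<in> q" using pf_symdiff q by blast
          then have "codim (symdiff x y) \<le> height q" using codim_le q by blast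
          then have lt: "codim (symdiff x y) < enat k" using q by (meson le_less_trans)
          then obtain m where m: "codim (symdiff x y) = enat m" using enat_iless by blast
          then have mk: "m < k" using lt by simp
          have "cdist x y = inverse (2 ^ m)" unfolding cdist_def using m by simp
          moreover have "inverse (2 ^ k :: real) \<le> inverse (2 ^ m)"
            using mk by (intro le_imp_inverse_le) (simp_all add: power_increasing)
          ultimately show False using c by simp
        qed
      qed
      then show "y \<in> U" using x unfolding U_def by blast
    qed
    then show "\<exists>e>0. \<forall>y. cdist x y < e \<longrightarrow> y \<in> U"
      by (intro exI[of _ "inverse (2 ^ k :: real)"]) simp
  qed
  moreover have "a \<in> U" unfolding U_def by blast
  ultimately have "U \<inter> T \<noteq> {}" using D unfolding codim_dense_def by blast
  then show ?thesis unfolding U_def by blast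
qed

lemma fin_sup:
  assumes "finite Q" "pf r" "\<And>q. q \<in> Q \<Longrightarrow> pf q \<and> (\<exists>a\<in>S. a \<in> q \<and> a \<notin> r)"
    "bot \<in> S" "\<And>a b. a \<in> S \<Longrightarrow> b \<in> S \<Longrightarrow> sup a b \<in> S"
  shows "\<exists>k\<in>S. k \<notin> r \<and> (\<forall>q\<in>Q. k \<in> q)"
  using assms(1,3)
proof (induction Q rule: finite_induct)
  case empty
  then show ?case using assms(4) pf_bot[OF assms(2)] by blast
next
  case (insert q Q)
  then obtain k where k: "k \<in> S" "k \<notin> r" "\<forall>q\<in>Q. k \<in> q" by blast
  obtain a where a: "a \<in> S" "a \<in> q" "a \<notin> r" and pq: "pf q" using insert.prems by blast
  have "sup k a \<in> S" using assms(5) k(1) a(1) by blast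
  moreover have "sup k a \<notin> r" using pf_sup[OF assms(2)] k a by blast
  moreover have "\<forall>q'\<in>insert q Q. sup k a \<in> q'"
  proof
    fix q' assume "q' \<in> insert q Q"
    then show "sup k a \<in> q'"
    proof
      assume "q' = q" then show ?thesis using pf_sup[OF pq] a by blast
    next
      assume "q' \<in> Q" then show ?thesis using pf_sup insert.prems k by blast
    qed
  qed
  ultimately show ?case by blast
qed

lemma fin_inf:
  assumes "finite Q" "pf r" "\<And>q. q \<in> Q \<Longrightarrow> pf q \<and> (\<exists>a\<in>S. a \<in> r \<and> a \<notin> q)"
    "top \<in> S" "\<And>a b. a \<in> S \<Longrightarrow> b \<in> S \<Longrightarrow> inf a b \<in> S"
  shows "\<exists>t\<in>S. t \<in> r \<and> (\<forall>q\<in>Q. t \<notin> q)"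
  using assms(1,3)
proof (induction Q rule: finite_induct)
  case empty
  then show ?case using assms(4) pf_top[OF assms(2)] by blast
next
  case (insert q Q)
  then obtain t where t: "t \<in> S" "t \<in> r" "\<forall>q\<in>Q. t \<notin> q" by blast
  obtain a where a: "a \<in> S" "a \<in> r" "a \<notin> q" and pq: "pf q" using insert.prems by blast
  have "inf t a \<in> S" using assms(5) t(1) a(1) by blast
  moreover have "inf t a \<in> r" using pf_inf[OF assms(2)] t a by blast
  moreover have "\<forall>q'\<in>insert q Q. inf t a \<notin> q'"
  proof
    fix q' assume "q' \<in> insert q Q"
    then show "inf t a \<notin> q'"
    proof
      assume "q' = q" then show ?thesis using pf_inf[OF pq] a by blast
    next
      assume "q' \<in> Q" then show ?thesis using pf_inf insert.prems t by blast
    qed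
  qed
  ultimately show ?case by blast
qed


lemma ismax_in: "ismax r k \<Longrightarrow> pf q \<Longrightarrow> \<not> q \<subseteq> r \<Longrightarrow> k \<in> q"
  unfolding ismax_def using pf_up by blast

lemma ismax_unique: "ismax r k \<Longrightarrow> ismax r k' \<Longrightarrow> k = k'"
  unfolding ismax_def by (blast intro: order.antisym)

lemma ismin_unique: "ismin r x \<Longrightarrow> ismin r y \<Longrightarrow> x = y"
  unfolding ismin_def by (blast intro: order.antisym)

lemma ismax_char:
  fixes r :: "'a::coheyting set"
  assumes H: "hausdorff TYPE('a)" and r: "pf r" "height r = enat n" and c: "c \<notin> r"
    and h: "\<And>q. pf q \<Longrightarrow> height q < enat (n+2) \<Longrightarrow> \<not> q \<subseteq> r \<Longrightarrow> c \<in> q"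
  shows "ismax r c"
  unfolding ismax_def
proof (intro conjI allI impI)
  show "c \<notin> r" by (rule c)
next
  fix a assume a: "a \<notin> r"
  show "a \<le> c"
  proof (rule crit[OF H])
    fix q assume q: "pf q" "height q \<noteq> \<infinity>" "a \<in> q"
    show "c \<in> q"
    proof (cases "height q < enat (n+2)")
      case True
      have "\<not> q \<subseteq> r" using a q(3) by blast
      then show ?thesis using h q(1) True by blast
    next
      case False
      obtain h where hq: "height q = enat h" using q(2) by auto
      then have "n + 1 \<le> h" using False by simp
      then obtain q' where q': "pf q'" "q' \<subseteq> q" "height q' = enat (n+1)"
        using exact_height[OF q(1) hq] by blast
      have "\<not> q' \<subseteq> r"
      proof
        assume "q' \<subseteq> r"
        then have "height q' \<le> height r" using height_mono q'(1) r(1) by blast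
        then show False using q'(3) r(2) by simp
      qed
      then have "c \<in> q'" using h q'(1,3) by simp
      then show ?thesis using q'(2) by blast
    qed
  qed
qed

lemma kappa_exists:
  fixes r :: "'a::coheyting set"
  assumes H: "hausdorff TYPE('a)" and PC: "precompact TYPE('a)" and r: "pf r" "height r = enat n"
  shows "\<exists>k. ismax r k"
proof -
  let ?Q = "{q::'a set. pf q \<and> height q < enat (n+2) \<and> \<not> q \<subseteq> r}"
  have "finite ?Q" using fin_P[OF PC, of "n+2"] by (rule finite_subset[rotated]) blast
  moreover have "\<And>q. q \<in> ?Q \<Longrightarrow> pf q \<and> (\<exists>a\<in>UNIV. a \<in> q \<and> a \<notin> r)" by blast
  ultimately obtain c where c: "c \<notin> r" "\<forall>q\<in>?Q. c \<in> q"
    using fin_sup[of ?Q r UNIV] r(1) by blast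
  have "ismax r c" by (rule ismax_char[OF H r c(1)]) (use c(2) in blast)
  then show ?thesis by blast
qed

lemma iso:
  fixes r :: "'a::coheyting set"
  assumes H: "hausdorff TYPE('a)" and D: "codim_dense T" and r: "pf r" "height r = enat n"
    and k: "ismax r k"
  shows "k \<in> T"
proof -
  obtain t where t: "t \<in> T" "\<forall>q. pf q \<and> height q < enat (n+2) \<longrightarrow> (k \<in> q \<longleftrightarrow> t \<in> q)"
    using approx[OF D, of "n+2" k] by blast
  have "k \<notin> r" using k unfolding ismax_def by blast
  then have "t \<notin> r" using t(2) r by simp
  have "ismax r t"
  proof (rule ismax_char[OF H r \<open>t \<notin> r\<close>])
    fix q assume q: "pf q" "height q < enat (n+2)" "\<not> q \<subseteq> r"
    then have "k \<in> q" using ismax_in[OF k] by blast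
    then show "t \<in> q" using t(2) q by blast
  qed
  then show ?thesis using ismax_unique k t(1) by blast
qed

lemma diff_min:
  fixes r :: "'a::coheyting set"
  assumes H: "hausdorff TYPE('a)" and r: "pf r" and k: "ismax r k" and t: "t \<in> r"
    and h: "\<And>q. pf q \<Longrightarrow> q \<subseteq> r \<Longrightarrow> t \<in> q \<Longrightarrow> q = r"
  shows "ismin r (cdiff t k)"
  unfolding ismin_def
proof (intro conjI ballI)
  have "k \<notin> r" using k unfolding ismax_def by blast
  then show "cdiff t k \<in> r" using pf_cdiff[OF r t] by blast
next
  fix a assume a: "a \<in> r"
  have "t \<le> sup k a"
  proof (rule crit[OF H])
    fix q assume q: "pf q" "height q \<noteq> \<infinity>" "t \<in> q"
    show "sup k a \<in> q"
    proof (cases "k \<in> q")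
      case True then show ?thesis using pf_sup[OF q(1)] by blast
    next
      case False
      then have "q \<subseteq> r" using ismax_in[OF k q(1)] by blast
      then have "q = r" using h q(1,3) by blast
      then show ?thesis using a pf_sup[OF q(1)] by blast
    qed
  qed
  then show "cdiff t k \<le> a" using cdiff_le_iff by blast
qed

lemma below_finite:
  fixes r :: "'a::coheyting set"
  assumes PC: "precompact TYPE('a)" and r: "pf r" "height r = enat n"
  shows "finite {q. pf q \<and> q \<subset> r}"
proof -
  have "{q. pf q \<and> q \<subset> r} \<subseteq> {q::'a set. pf q \<and> height q < enat (n+1)}"
  proof
    fix q assume "q \<in> {q. pf q \<and> q \<subset> r}"
    then have "pf q" "q \<subseteq> r" by auto
    then have "height q \<le> enat n" using height_mono r by metis
    then show "q \<in> {q::'a set. pf q \<and> height q < enat (n+1)}" using \<open>pf q\<close>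
      by (metis Suc_eq_plus1 enat_ord_simps(2) enat_ile le_imp_less_Suc enat_ord_simps(1) mem_Collect_eq)
  qed
  then show ?thesis using fin_P[OF PC] finite_subset by blast
qed

lemma min_exists:
  fixes r :: "'a::coheyting set"
  assumes H: "hausdorff TYPE('a)" and PC: "precompact TYPE('a)" and r: "pf r" "height r = enat n"
  shows "\<exists>x. ismin r x"
proof -
  let ?Q = "{q. pf q \<and> q \<subset> r}"
  have "\<And>q. q \<in> ?Q \<Longrightarrow> pf q \<and> (\<exists>a\<in>UNIV. a \<in> r \<and> a \<notin> q)" by blast
  then obtain t where t: "t \<in> r" "\<forall>q\<in>?Q. t \<notin> q"
    using fin_inf[of ?Q r UNIV] below_finite[OF PC r] r(1) by blast
  obtain k where k: "ismax r k" using kappa_exists[OF H PC r] by blast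
  have "ismin r (cdiff t k)"
    by (rule diff_min[OF H r(1) k t(1)]) (use t(2) in blast)
  then show ?thesis by blast
qed

lemma min_JI:
  fixes r :: "'a::coheyting set"
  assumes H: "hausdorff TYPE('a)" and PC: "precompact TYPE('a)" and r: "pf r" "height r = enat n"
    and x: "ismin r x"
  shows "x \<in> compl_join_irred"
proof -
  obtain k where k: "ismax r k" using kappa_exists[OF H PC r] by blast
  have xr: "x \<in> r" and xl: "\<forall>a\<in>r. x \<le> a" using x unfolding ismin_def by auto
  have "x \<noteq> bot" using xr pf_bot[OF r(1)] by blast
  moreover have "\<exists>a\<in>A. x \<le> a" if "is_lub A s" "x \<le> s" for A s
  proof (rule ccontr)
    assume "\<not> (\<exists>a\<in>A. x \<le> a)"
    then have "\<forall>a\<in>A. a \<notin> r" using xl by blast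
    then have "\<forall>a\<in>A. a \<le> k" using k unfolding ismax_def by blast
    then have "s \<le> k" using that(1) unfolding is_lub_def by blast
    then have "x \<le> k" using that(2) order_trans by blast
    then have "k \<in> r" using pf_up[OF r(1) xr] by blast
    then show False using k unfolding ismax_def by blast
  qed
  ultimately show ?thesis unfolding compl_join_irred_def by blast
qed

lemma max_MI:
  fixes r :: "'a::coheyting set"
  assumes r: "pf r" and k: "ismax r k" and x: "ismin r x"
  shows "k \<in> compl_meet_irred"
proof -
  have xr: "x \<in> r" and xl: "\<forall>a\<in>r. x \<le> a" using x unfolding ismin_def by auto
  have kr: "k \<notin> r" and kl: "\<forall>a. a \<notin> r \<longrightarrow> a \<le> k" using k unfolding ismax_def by auto
  have "k \<noteq> top" using kr pf_top[OF r] by blast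
  moreover have "\<exists>a\<in>A. a \<le> k" if "is_glb A g" "g \<le> k" for A g
  proof (rule ccontr)
    assume "\<not> (\<exists>a\<in>A. a \<le> k)"
    then have "\<forall>a\<in>A. a \<in> r" using kl by blast
    then have "\<forall>a\<in>A. x \<le> a" using xl by blast
    then have "x \<le> g" using that(1) unfolding is_glb_def by blast
    then have "x \<le> k" using that(2) by (rule order_trans)
    then have "k \<in> r" using pf_up[OF r xr] by blast
    then show False using kr by blast
  qed
  ultimately show ?thesis unfolding compl_meet_irred_def by blast
qed

lemma JI_char:
  fixes x :: "'a::coheyting"
  assumes H: "hausdorff TYPE('a)" and x: "x \<in> compl_join_irred"
  shows "\<exists>r n. pf r \<and> height r = enat n \<and> ismin r x"
proof -
  have xb: "x \<noteq> bot" and xj: "\<And>A s. is_lub A s \<Longrightarrow> x \<le> s \<Longrightarrow> \<exists>a\<in>A. x \<le> a"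
    using x unfolding compl_join_irred_def by auto
  let ?r = "{a. x \<le> a}"
  have pr: "pf ?r" unfolding prime_filter_def
  proof (intro conjI allI impI)
    show "top \<in> ?r" by simp
    show "bot \<notin> ?r" using xb bot_unique by blast
  next
    fix a b assume "a \<in> ?r \<and> a \<le> b" then show "b \<in> ?r" using order_trans by blast
  next
    fix a b assume "a \<in> ?r \<and> b \<in> ?r" then show "inf a b \<in> ?r" by simp
  next
    fix a b assume ab: "sup a b \<in> ?r"
    have "is_lub {a, b} (sup a b)" unfolding is_lub_def by simp
    then show "a \<in> ?r \<or> b \<in> ?r" using xj ab by blast
  qed
  have ci: "codim x \<noteq> \<infinity>" using H xb unfolding hausdorff_def by blast
  then obtain q where q: "pf q" "x \<in> q" "height q = codim x" using codim_witness by blast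
  have "?r \<subseteq> q" using pf_up[OF q(1) q(2)] by blast
  then have "height ?r \<le> height q" using height_mono pr q(1) by blast
  moreover obtain i where "codim x = enat i" using ci by auto
  ultimately obtain n where "height ?r = enat n" using q(3) enat_ile by metis
  moreover have "ismin ?r x" unfolding ismin_def by simp
  ultimately show ?thesis using pr by blast
qed

lemma MI_char:
  fixes c :: "'a::coheyting"
  assumes H: "hausdorff TYPE('a)" and PC: "precompact TYPE('a)" and c: "c \<in> compl_meet_irred"
  shows "\<exists>r n. pf r \<and> height r = enat n \<and> ismax r c"
proof -
  have cm: "\<And>A g. is_glb A g \<Longrightarrow> g \<le> c \<Longrightarrow> \<exists>a\<in>A. a \<le> c"
    using c unfolding compl_meet_irred_def by auto
  define A where "A = {k. \<exists>r n. pf r \<and> height r = enat n \<and> c \<notin> r \<and> ismax r k}"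
  have lb: "\<forall>k\<in>A. c \<le> k" unfolding A_def ismax_def by blast
  have gr: "u \<le> c" if u: "\<forall>k\<in>A. u \<le> k" for u
  proof (rule crit[OF H])
    fix q assume q: "pf q" "height q \<noteq> \<infinity>" "u \<in> q"
    show "c \<in> q"
    proof (rule ccontr)
      assume "c \<notin> q"
      obtain n where n: "height q = enat n" using q(2) by auto
      obtain k where k: "ismax q k" using kappa_exists[OF H PC q(1) n] by blast
      then have "k \<in> A" unfolding A_def using q(1) n \<open>c \<notin> q\<close> by blast
      then have "u \<le> k" using u by blast
      then have "k \<in> q" using pf_up[OF q(1) q(3)] by blast
      then show False using k unfolding ismax_def by blast
    qed
  qed
  have "is_glb A c" unfolding is_glb_def using lb gr by blast
  then obtain k where k: "k \<in> A" "k \<le> c" using cm by blast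
  then have "c = k" using lb by (blast intro: order.antisym)
  then show ?thesis using k(1) unfolding A_def by blast
qed

lemma gen_sub: "coheyting_subalg (gen_subalg X)"
  unfolding gen_subalg_def coheyting_subalg_def by blast

lemma gen_incl: "X \<subseteq> gen_subalg X"
  unfolding gen_subalg_def by blast

lemma gen_least: "coheyting_subalg T \<Longrightarrow> X \<subseteq> T \<Longrightarrow> gen_subalg X \<subseteq> T"
  unfolding gen_subalg_def by blast


lemma JI_sup:
  fixes R :: "'a::coheyting set set"
  assumes H: "hausdorff TYPE('a)" and PC: "precompact TYPE('a)" and fin: "finite R"
    and R: "\<And>r. r \<in> R \<Longrightarrow> pf r \<and> height r \<noteq> \<infinity>"
  shows "\<exists>y\<in>gen_subalg compl_join_irred. \<forall>q. pf q \<longrightarrow> (y \<in> q \<longleftrightarrow> (\<exists>r\<in>R. r \<subseteq> q))"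
  using fin R
proof (induction R rule: finite_induct)
  case empty
  have "bot \<in> gen_subalg (compl_join_irred :: 'a set)" using gen_sub unfolding coheyting_subalg_def by blast
  then show ?case using pf_bot by blast
next
  case (insert r R)
  then obtain y where y: "y \<in> gen_subalg compl_join_irred" "\<forall>q. pf q \<longrightarrow> (y \<in> q \<longleftrightarrow> (\<exists>r\<in>R. r \<subseteq> q))"
    by blast
  have pr: "pf r" and hr: "height r \<noteq> \<infinity>" using insert.prems by auto
  obtain n where n: "height r = enat n" using hr by auto
  obtain x where x: "ismin r x" using min_exists[OF H PC pr n] by blast
  have "x \<in> compl_join_irred" by (rule min_JI[OF H PC pr n x])
  then have xg: "x \<in> gen_subalg compl_join_irred" using gen_incl by blast
  have "sup y x \<in> gen_subalg compl_join_irred" using gen_sub y(1) xg unfolding coheyting_subalg_def by blast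
  moreover have "\<forall>q. pf q \<longrightarrow> (sup y x \<in> q \<longleftrightarrow> (\<exists>r'\<in>insert r R. r' \<subseteq> q))"
  proof (intro allI impI)
    fix q :: "'a set" assume q: "pf q"
    have xl: "\<forall>a\<in>r. x \<le> a" and xr: "x \<in> r" using x unfolding ismin_def by auto
    have e0: "x \<in> q \<longleftrightarrow> r \<subseteq> q"
    proof
      assume xq: "x \<in> q"
      show "r \<subseteq> q"
      proof
        fix a assume "a \<in> r" then have "x \<le> a" using xl by blast
        then show "a \<in> q" using pf_up[OF q xq] by blast
      qed
    next
      assume "r \<subseteq> q" then show "x \<in> q" using xr by blast
    qed
    have e1: "sup y x \<in> q \<longleftrightarrow> y \<in> q \<or> x \<in> q" by (rule pf_sup[OF q])
    have e2: "y \<in> q \<longleftrightarrow> (\<exists>r\<in>R. r \<subseteq> q)" using y(2) q by blast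
    show "sup y x \<in> q \<longleftrightarrow> (\<exists>r'\<in>insert r R. r' \<subseteq> q)" unfolding e1 e2 e0 by blast
  qed
  ultimately show ?case by blast
qed

lemma dense_gen:
  assumes H: "hausdorff TYPE('a::coheyting)" and PC: "precompact TYPE('a)"
  shows "codim_dense (gen_subalg (compl_join_irred :: 'a set))"
  unfolding codim_dense_def
proof (intro allI impI)
  fix U :: "'a set" assume U: "codim_open U \<and> U \<noteq> {}"
  then obtain x where x: "x \<in> U" by blast
  then obtain e where e: "e > 0" "\<forall>y. cdist x y < e \<longrightarrow> y \<in> U" using U unfolding codim_open_def by blast
  obtain k where k: "(1/2::real) ^ k < e" using real_arch_pow_inv[OF e(1), of "1/2"] by auto
  let ?R = "{r::'a set. pf r \<and> height r < enat k \<and> x \<in> r}"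
  have finR: "finite ?R" using fin_P[OF PC, of k] by (rule finite_subset[rotated]) blast
  have Rp: "pf r \<and> height r \<noteq> \<infinity>" if "r \<in> ?R" for r
  proof -
    have "pf r" "height r < enat k" using that by auto
    then show ?thesis using enat_iless by force
  qed
  obtain y where y: "y \<in> gen_subalg compl_join_irred"
      "\<forall>q. pf q \<longrightarrow> (y \<in> q \<longleftrightarrow> (\<exists>r\<in>?R. r \<subseteq> q))"
    using JI_sup[OF H PC finR Rp] by blast
  have ag: "x \<in> q \<longleftrightarrow> y \<in> q" if q: "pf q" "height q < enat k" for q
  proof
    assume "x \<in> q" then have "q \<in> ?R" using q by blast
    then show "y \<in> q" using y(2) q by blast
  next
    assume "y \<in> q" then obtain r where "r \<in> ?R" "r \<subseteq> q" using y(2) q by blast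
    then show "x \<in> q" by blast
  qed
  have ck: "enat k \<le> codim (symdiff x y)"
    unfolding codim_def
  proof (rule Inf_greatest)
    fix h assume "h \<in> {height p |p. pf p \<and> symdiff x y \<in> p}"
    then obtain p where p: "h = height p" "pf p" "symdiff x y \<in> p" by blast
    show "enat k \<le> h"
    proof (rule ccontr)
      assume "\<not> enat k \<le> h"
      then have hp: "height p < enat k" using p(1) by simp
      have "cdiff x y \<in> p \<or> cdiff y x \<in> p" using p pf_symdiff by blast
      then obtain q' where q': "pf q'" "q' \<subseteq> p" "\<not> (x \<in> q' \<longleftrightarrow> y \<in> q')"
        using prime_sep[OF p(2)] by blast
      have "height q' \<le> height p" using height_mono q'(1,2) p(2) by blast
      then have "height q' < enat k" using hp by simp
      then show False using ag q'(1,3) by blast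
    qed
  qed
  have "cdist x y < e"
  proof (cases "codim (symdiff x y)")
    case (enat m)
    then have km: "k \<le> m" using ck by simp
    have "cdist x y = inverse (2 ^ m)" unfolding cdist_def using enat by simp
    also have "\<dots> \<le> inverse (2 ^ k)" by (intro le_imp_inverse_le) (simp_all add: power_increasing km)
    also have "\<dots> = (1/2) ^ k" by (simp add: power_one_over inverse_eq_divide)
    finally show ?thesis using k by simp
  next
    case infinity
    then show ?thesis unfolding cdist_def using e(1) by simp
  qed
  then have "y \<in> U" using e(2) by blast
  then show "U \<inter> gen_subalg compl_join_irred \<noteq> {}" using y(1) by blast
qed

lemma JI_in_dense:
  fixes x :: "'a::coheyting"
  assumes H: "hausdorff TYPE('a)" and PC: "precompact TYPE('a)"
    and S: "coheyting_subalg T" and D: "codim_dense T" and x: "x \<in> compl_join_irred"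
  shows "x \<in> T"
proof -
  obtain r n where r: "pf r" "height r = enat n" and xm: "ismin r x" using JI_char[OF H x] by blast
  obtain k where k: "ismax r k" using kappa_exists[OF H PC r] by blast
  have kT: "k \<in> T" by (rule iso[OF H D r k])
  obtain t where t: "t \<in> T" "\<forall>q. pf q \<and> height q < enat (n+1) \<longrightarrow> (x \<in> q \<longleftrightarrow> t \<in> q)"
    using approx[OF D, of "n+1" x] by blast
  have xr: "x \<in> r" and xl: "\<forall>a\<in>r. x \<le> a" using xm unfolding ismin_def by auto
  have "t \<in> r" using t(2) r xr by simp
  have "ismin r (cdiff t k)"
  proof (rule diff_min[OF H r(1) k \<open>t \<in> r\<close>])
    fix q assume q: "pf q" "q \<subseteq> r" "t \<in> q"
    have "height q \<le> enat n" using height_mono[OF q(2) q(1) r(1)] r(2) by simp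
    then have "height q < enat (n+1)" by (metis Suc_eq_plus1 enat_ile enat_ord_simps(1) enat_ord_simps(2) le_imp_less_Suc)
    then have "x \<in> q" using t(2) q by blast
    then have "r \<subseteq> q" using xl pf_up[OF q(1)] by blast
    then show "q = r" using q(2) by blast
  qed
  then have "cdiff t k = x" using ismin_unique xm by blast
  moreover have "cdiff t k \<in> T" using S t(1) kT unfolding coheyting_subalg_def by blast
  ultimately show ?thesis by simp
qed

lemma MI_in_dense:
  fixes c :: "'a::coheyting"
  assumes H: "hausdorff TYPE('a)" and PC: "precompact TYPE('a)"
    and D: "codim_dense T" and c: "c \<in> compl_meet_irred"
  shows "c \<in> T"
proof -
  obtain r n where r: "pf r" "height r = enat n" "ismax r c" using MI_char[OF H PC c] by blast
  show ?thesis by (rule iso[OF H D r(1,2,3)])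
qed

lemma JI_in_genMI:
  fixes x :: "'a::coheyting"
  assumes H: "hausdorff TYPE('a)" and PC: "precompact TYPE('a)" and x: "x \<in> compl_join_irred"
  shows "x \<in> gen_subalg compl_meet_irred"
proof -
  let ?M = "gen_subalg (compl_meet_irred :: 'a set)"
  have SM: "coheyting_subalg ?M" by (rule gen_sub)
  have MI_M: "compl_meet_irred \<subseteq> ?M" by (rule gen_incl)
  have kapM: "\<exists>k\<in>?M. ismax q k" if q: "pf q" "height q = enat m" for q :: "'a set" and m
  proof -
    obtain k where k: "ismax q k" using kappa_exists[OF H PC q] by blast
    obtain y where y: "ismin q y" using min_exists[OF H PC q] by blast
    have "k \<in> compl_meet_irred" by (rule max_MI[OF q(1) k y])
    then show ?thesis using k MI_M by blast
  qed
  obtain r n where r: "pf r" "height r = enat n" and xm: "ismin r x" using JI_char[OF H x] by blast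
  let ?Q = "{q. pf q \<and> q \<subset> r}"
  have "\<And>q. q \<in> ?Q \<Longrightarrow> pf q \<and> (\<exists>a\<in>?M. a \<in> r \<and> a \<notin> q)"
  proof -
    fix q assume q: "q \<in> ?Q"
    then have pq: "pf q" and qr: "q \<subset> r" by auto
    have "height q \<le> enat n" using height_mono[of q r] pq r qr by (metis less_imp_le)
    then obtain m where m: "height q = enat m" using enat_ile by blast
    obtain k where k: "k \<in> ?M" "ismax q k" using kapM[OF pq m] by blast
    have "k \<notin> q" using k(2) unfolding ismax_def by blast
    moreover have "k \<in> r" using ismax_in[OF k(2) r(1)] qr by blast
    ultimately show "pf q \<and> (\<exists>a\<in>?M. a \<in> r \<and> a \<notin> q)" using pq k(1) by blast
  qed
  moreover have "top \<in> ?M" "\<And>a b. a \<in> ?M \<Longrightarrow> b \<in> ?M \<Longrightarrow> inf a b \<in> ?M"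
    using SM unfolding coheyting_subalg_def by blast+
  ultimately obtain t where t: "t \<in> ?M" "t \<in> r" "\<forall>q\<in>?Q. t \<notin> q"
    using fin_inf[of ?Q r ?M] below_finite[OF PC r] r(1) by blast
  obtain k where k: "k \<in> ?M" "ismax r k" using kapM[OF r] by blast
  have "ismin r (cdiff t k)"
    by (rule diff_min[OF H r(1) k(2) t(2)]) (use t(3) in blast)
  then have "cdiff t k = x" using ismin_unique xm by blast
  moreover have "cdiff t k \<in> ?M" using SM t(1) k(1) unfolding coheyting_subalg_def by blast
  ultimately show ?thesis by simp
qed

theorem proposition6p12:
  assumes "precompact TYPE('a::coheyting)" and "hausdorff TYPE('a)"
  shows "gen_subalg (compl_join_irred :: 'a set) = gen_subalg compl_meet_irred
       \<and> coheyting_subalg (gen_subalg (compl_join_irred :: 'a set))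
       \<and> codim_dense (gen_subalg (compl_join_irred :: 'a set))
       \<and> (\<forall>T::'a set. coheyting_subalg T \<and> codim_dense T
              \<longrightarrow> gen_subalg compl_join_irred \<subseteq> T)"
proof -
  note PC = assms(1) and H = assms(2)
  let ?G = "gen_subalg (compl_join_irred :: 'a set)"
  let ?M = "gen_subalg (compl_meet_irred :: 'a set)"
  have sG: "coheyting_subalg ?G" by (rule gen_sub)
  have dG: "codim_dense ?G" by (rule dense_gen[OF H PC])
  have "?G \<subseteq> ?M"
    by (rule gen_least[OF gen_sub]) (use JI_in_genMI[OF H PC] in blast)
  moreover have "?M \<subseteq> ?G"
    by (rule gen_least[OF sG]) (use MI_in_dense[OF H PC dG] in blast)
  moreover have "\<forall>T::'a set. coheyting_subalg T \<and> codim_dense T \<longrightarrow> ?G \<subseteq> T"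
  proof (intro allI impI)
    fix T :: "'a set" assume T: "coheyting_subalg T \<and> codim_dense T"
    show "?G \<subseteq> T"
      by (rule gen_least) (use T JI_in_dense[OF H PC] in blast)+
  qed
  ultimately show ?thesis using sG dG by blast
qed

end
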